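(* Let $(G,Y)$ be a $C$-group and let $S(G,Y)$ be its factorization semigroup with product homomorphism $\alpha_G:S(G,Y)\to G$. Two elements $s_1,s_2\in S(G,Y)$ are equivalent if and only if $\alpha_G(s_1)=\alpha_G(s_2)$.
   Context: An equipped group is a pair $(G,O)$ where $G$ is a group and $O\subset G$ is a union of finitely many conjugacy classes of $G$ with $1\notin O$. A $C$-group is an equipped group $(G,Y)$ such that $G$ admits a presentation whose generators are the elements of $Y$ and all of whose defining relations have the form $z^{-1}yz=y'$ with $y,y',z\in Y$. The factorization semigroup $S(G,O)$ is the semigroup generated by symbols $x_g$, $g\in O$, subject to the relations $x_{g_1}x_{g_2}=x_{g_2}x_{g_2^{-1}g_1g_2}=x_{g_1g_2g_1^{-1}}x_{g_1}$ for all $g_1,g_2\in O$; the product homomorphism $\alpha_G:S(G,O)\to G$ is given by $x_g\mapsto g$. Two elements $s_1,s_2$ of a semigroup $S$ are called equivalent if there exist $s_3,s_4\in S$ with $s_3s_1s_4=s_3s_2s_4$. *)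

theory Defs
  imports "HOL-Algebra.Group"
begin

definition conj_class :: "('a, 'b) monoid_scheme \<Rightarrow> 'a \<Rightarrow> 'a set" where
  "conj_class G g = {h \<otimes>\<^bsub>G\<^esub> g \<otimes>\<^bsub>G\<^esub> inv\<^bsub>G\<^esub> h | h. h \<in> carrier G}"

definition equipped_group :: "('a, 'b) monoid_scheme \<Rightarrow> 'a set \<Rightarrow> bool" where
  "equipped_group G Ob \<longleftrightarrow> group G \<and> Ob \<subseteq> carrier G \<and> \<one>\<^bsub>G\<^esub> \<notin> Ob \<and>
     (\<exists>F. finite F \<and> F \<subseteq> carrier G \<and> Ob = (\<Union>g\<in>F. conj_class G g))"

text \<open>Letters are pairs (y, b): b = True means y, b = False means y inverse.\<close>
definition letter_val :: "('a, 'b) monoid_scheme \<Rightarrow> 'a \<times> bool \<Rightarrow> 'a" where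
  "letter_val G l = (if snd l then fst l else inv\<^bsub>G\<^esub> (fst l))"

definition word_val :: "('a, 'b) monoid_scheme \<Rightarrow> ('a \<times> bool) list \<Rightarrow> 'a" where
  "word_val G w = foldr (\<lambda>l x. letter_val G l \<otimes>\<^bsub>G\<^esub> x) w \<one>\<^bsub>G\<^esub>"

text \<open>The congruence on words in Y^{+-1} generated by free cancellation and by
  the relators z^{-1} y z = y' for (y, y', z) in R; words modulo this congruence
  form the group with presentation < Y | R >.\<close>
inductive pres_eq :: "'a set \<Rightarrow> ('a \<times> 'a \<times> 'a) set \<Rightarrow> ('a \<times> bool) list \<Rightarrow> ('a \<times> bool) list \<Rightarrow> bool"
  for Y R where
  pres_refl: "pres_eq Y R w w"
| pres_sym: "pres_eq Y R v w \<Longrightarrow> pres_eq Y R w v"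
| pres_trans: "pres_eq Y R u v \<Longrightarrow> pres_eq Y R v w \<Longrightarrow> pres_eq Y R u w"
| pres_ctxt: "pres_eq Y R v w \<Longrightarrow> pres_eq Y R (u @ v @ x) (u @ w @ x)"
| pres_cancel: "y \<in> Y \<Longrightarrow> pres_eq Y R [(y, b), (y, \<not> b)] []"
| pres_rel: "(y, y', z) \<in> R \<Longrightarrow> pres_eq Y R [(z, False), (y, True), (z, True)] [(y', True)]"

text \<open>G has the presentation < Y | R > (with generators mapped identically):
  Y generates G and the canonical map from < Y | R > to G is a well-defined
  bijection, i.e. two words have the same value in G iff they are equal in < Y | R >.\<close>
definition presents :: "('a, 'b) monoid_scheme \<Rightarrow> 'a set \<Rightarrow> ('a \<times> 'a \<times> 'a) set \<Rightarrow> bool" where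
  "presents G Y R \<longleftrightarrow>
     Y \<subseteq> carrier G \<and>
     carrier G = word_val G ` lists (Y \<times> UNIV) \<and>
     (\<forall>v \<in> lists (Y \<times> UNIV). \<forall>w \<in> lists (Y \<times> UNIV).
        word_val G v = word_val G w \<longleftrightarrow> pres_eq Y R v w)"

definition C_group :: "('a, 'b) monoid_scheme \<Rightarrow> 'a set \<Rightarrow> bool" where
  "C_group G Y \<longleftrightarrow> equipped_group G Y \<and> (\<exists>R \<subseteq> Y \<times> Y \<times> Y. presents G Y R)"

text \<open>Elements of S(G,Ob) are represented by nonempty words over Ob; fs_eq is the
  semigroup congruence generated by the defining relations
  x_{g1} x_{g2} = x_{g2} x_{g2^{-1} g1 g2} = x_{g1 g2 g1^{-1}} x_{g1}.\<close>
inductive fs_eq :: "('a, 'b) monoid_scheme \<Rightarrow> 'a set \<Rightarrow> 'a list \<Rightarrow> 'a list \<Rightarrow> bool"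
  for G Ob where
  fs_refl: "fs_eq G Ob w w"
| fs_sym: "fs_eq G Ob v w \<Longrightarrow> fs_eq G Ob w v"
| fs_trans: "fs_eq G Ob u v \<Longrightarrow> fs_eq G Ob v w \<Longrightarrow> fs_eq G Ob u w"
| fs_ctxt: "fs_eq G Ob v w \<Longrightarrow> u \<in> lists Ob \<Longrightarrow> x \<in> lists Ob \<Longrightarrow> fs_eq G Ob (u @ v @ x) (u @ w @ x)"
| fs_rel1: "g1 \<in> Ob \<Longrightarrow> g2 \<in> Ob \<Longrightarrow>
     fs_eq G Ob [g1, g2] [g2, inv\<^bsub>G\<^esub> g2 \<otimes>\<^bsub>G\<^esub> g1 \<otimes>\<^bsub>G\<^esub> g2]"
| fs_rel2: "g1 \<in> Ob \<Longrightarrow> g2 \<in> Ob \<Longrightarrow>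
     fs_eq G Ob [g1, g2] [g1 \<otimes>\<^bsub>G\<^esub> g2 \<otimes>\<^bsub>G\<^esub> inv\<^bsub>G\<^esub> g1, g1]"

definition fs_words :: "'a set \<Rightarrow> 'a list set" where
  "fs_words Ob = {w. w \<in> lists Ob \<and> w \<noteq> []}"

definition fs_prod :: "('a, 'b) monoid_scheme \<Rightarrow> 'a list \<Rightarrow> 'a" where
  "fs_prod G w = foldr (\<lambda>g x. g \<otimes>\<^bsub>G\<^esub> x) w \<one>\<^bsub>G\<^esub>"

definition fs_equivalent :: "('a, 'b) monoid_scheme \<Rightarrow> 'a set \<Rightarrow> 'a list \<Rightarrow> 'a list \<Rightarrow> bool" where
  "fs_equivalent G Ob s1 s2 \<longleftrightarrow>
     (\<exists>s3 \<in> fs_words Ob. \<exists>s4 \<in> fs_words Ob. fs_eq G Ob (s3 @ s1 @ s4) (s3 @ s2 @ s4))"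

end

theory Submission imports Defs begin

definition conjw :: "('a,'b) monoid_scheme \<Rightarrow> 'a \<Rightarrow> 'a list \<Rightarrow> 'a list" where
  "conjw G h w = map (\<lambda>x. h \<otimes>\<^bsub>G\<^esub> x \<otimes>\<^bsub>G\<^esub> inv\<^bsub>G\<^esub> h) w"

definition comb :: "('a,'b) monoid_scheme \<Rightarrow> 'a list \<times> 'a list \<Rightarrow> 'a list \<times> 'a list \<Rightarrow> 'a list \<times> 'a list" where
  "comb G P Q = (fst Q @ fst P, conjw G (fs_prod G (fst Q)) (snd P) @ snd Q)"

fun I1 :: "'a \<times> bool \<Rightarrow> 'a list \<times> 'a list" where
  "I1 (y,b) = (if b then ([],[y]) else ([y],[]))"

fun Iw :: "('a,'b) monoid_scheme \<Rightarrow> ('a \<times> bool) list \<Rightarrow> 'a list \<times> 'a list" where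
  "Iw G [] = ([],[])"
| "Iw G (l#w) = comb G (I1 l) (Iw G w)"

definition EE :: "('a,'b) monoid_scheme \<Rightarrow> 'a set \<Rightarrow> 'a list \<Rightarrow> 'a list \<Rightarrow> bool" where
  "EE G Y a b \<longleftrightarrow> a \<in> lists Y \<and> b \<in> lists Y \<and> (\<exists>c\<in>lists Y. \<exists>d\<in>lists Y. fs_eq G Y (c@a@d) (c@b@d))"

definition FF :: "('a,'b) monoid_scheme \<Rightarrow> 'a set \<Rightarrow> 'a list \<times> 'a list \<Rightarrow> 'a list \<times> 'a list \<Rightarrow> bool" where
  "FF G Y P Q \<longleftrightarrow> (\<exists>u1\<in>lists Y. \<exists>u2\<in>lists Y. EE G Y (u1 @ fst P) (u2 @ fst Q) \<and> EE G Y (u1 @ snd P) (u2 @ snd Q))"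

locale cg = group G for G (structure) +
  fixes Y
  assumes Ysub: "Y \<subseteq> carrier G"
    and Yconj: "\<And>h y. h \<in> carrier G \<Longrightarrow> y \<in> Y \<Longrightarrow> h \<otimes> y \<otimes> inv h \<in> Y"
begin

lemma listsY_carrier: "w \<in> lists Y \<Longrightarrow> w \<in> lists (carrier G)"
  using Ysub by auto

lemma prod_closed: "w \<in> lists (carrier G) \<Longrightarrow> fs_prod G w \<in> carrier G"
  by (induction w) (auto simp: fs_prod_def)

lemma prod_Cons: "fs_prod G (g#w) = g \<otimes> fs_prod G w"
  by (simp add: fs_prod_def)

lemma prod_Nil: "fs_prod G [] = \<one>"
  by (simp add: fs_prod_def)

lemma prod_append: "a \<in> lists (carrier G) \<Longrightarrow> b \<in> lists (carrier G) \<Longrightarrow>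
    fs_prod G (a@b) = fs_prod G a \<otimes> fs_prod G b"
  by (induction a) (auto simp: prod_Cons prod_Nil prod_closed m_assoc)

lemma prodY_closed: "w \<in> lists Y \<Longrightarrow> fs_prod G w \<in> carrier G"
  using prod_closed listsY_carrier by blast

lemma prodY_append: "a \<in> lists Y \<Longrightarrow> b \<in> lists Y \<Longrightarrow>
    fs_prod G (a@b) = fs_prod G a \<otimes> fs_prod G b"
  using prod_append listsY_carrier by blast

lemma conjw_lists: "h \<in> carrier G \<Longrightarrow> w \<in> lists Y \<Longrightarrow> conjw G h w \<in> lists Y"
  by (auto simp: conjw_def Yconj)

lemma conjw_comp: "g \<in> carrier G \<Longrightarrow> h \<in> carrier G \<Longrightarrow> w \<in> lists (carrier G) \<Longrightarrow>
   conjw G g (conjw G h w) = conjw G (g \<otimes> h) w"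
  by (induction w) (auto simp: conjw_def m_assoc inv_mult_group)

lemma conjw_one: "w \<in> lists (carrier G) \<Longrightarrow> conjw G \<one> w = w"
  by (induction w) (auto simp: conjw_def)

lemma conjw_append: "conjw G h (a@b) = conjw G h a @ conjw G h b"
  by (simp add: conjw_def)

lemma fs_app_right: "fs_eq G Y v w \<Longrightarrow> x \<in> lists Y \<Longrightarrow> fs_eq G Y (v@x) (w@x)"
  using fs_ctxt[of G Y v w "[]" x] by simp

lemma fs_app_left: "fs_eq G Y v w \<Longrightarrow> u \<in> lists Y \<Longrightarrow> fs_eq G Y (u@v) (u@w)"
  using fs_ctxt[of G Y v w u "[]"] by simp

lemma swap1: "g \<in> Y \<Longrightarrow> q \<in> lists Y \<Longrightarrow> fs_eq G Y (g#q) (conjw G g q @ [g])"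
proof (induction q)
  case Nil
  then show ?case by (simp add: conjw_def fs_refl)
next
  case (Cons q1 qs)
  have a: "fs_eq G Y [g,q1] [g \<otimes> q1 \<otimes> inv g, g]"
    using Cons by (auto intro: fs_rel2)
  have b: "fs_eq G Y (g#q1#qs) ((g \<otimes> q1 \<otimes> inv g)#g#qs)"
    using fs_app_right[OF a, of qs] Cons by simp
  have c: "fs_eq G Y ([g \<otimes> q1 \<otimes> inv g] @ (g#qs)) ([g \<otimes> q1 \<otimes> inv g] @ (conjw G g qs @ [g]))"
    using Cons Ysub by (intro fs_app_left) (auto intro: Yconj)
  show ?case using fs_trans[OF b] c by (simp add: conjw_def)
qed

lemma swap: "p \<in> lists Y \<Longrightarrow> q \<in> lists Y \<Longrightarrow> fs_eq G Y (p@q) (conjw G (fs_prod G p) q @ p)"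
proof (induction p)
  case Nil
  then show ?case by (simp add: prod_Nil conjw_one listsY_carrier fs_refl)
next
  case (Cons g p)
  have gc: "g \<in> carrier G" using Cons Ysub by auto
  have pc: "fs_prod G p \<in> carrier G" using Cons prodY_closed by auto
  have a: "fs_eq G Y ([g] @ (p@q)) ([g] @ (conjw G (fs_prod G p) q @ p))"
    using Cons by (intro fs_app_left) auto
  have cq: "conjw G (fs_prod G p) q \<in> lists Y" using conjw_lists pc Cons by auto
  have b: "fs_eq G Y (g # conjw G (fs_prod G p) q) (conjw G g (conjw G (fs_prod G p) q) @ [g])"
    using swap1 Cons cq by auto
  have b2: "fs_eq G Y ((g # conjw G (fs_prod G p) q) @ p) ((conjw G g (conjw G (fs_prod G p) q) @ [g]) @ p)"
    using fs_app_right[OF b] Cons by auto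
  have e: "conjw G g (conjw G (fs_prod G p) q) = conjw G (fs_prod G (g#p)) q"
    using conjw_comp gc pc Cons listsY_carrier by (simp add: prod_Cons)
  show ?case using fs_trans[OF a] b2 e by simp
qed

lemma swap': "p \<in> lists Y \<Longrightarrow> d \<in> lists Y \<Longrightarrow> fs_eq G Y (p @ conjw G (inv (fs_prod G p)) d) (d @ p)"
proof -
  assume p: "p \<in> lists Y" and d: "d \<in> lists Y"
  have pc: "fs_prod G p \<in> carrier G" using p prodY_closed by auto
  have "conjw G (fs_prod G p) (conjw G (inv (fs_prod G p)) d) = d"
    using conjw_comp pc d listsY_carrier conjw_one by simp
  then show ?thesis using swap[OF p conjw_lists[OF _ d]] pc by (metis inv_closed)
qed


lemma fs_cong2: "fs_eq G Y a a' \<Longrightarrow> fs_eq G Y b b' \<Longrightarrow> a' \<in> lists Y \<Longrightarrow> b \<in> lists Y \<Longrightarrow>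
  fs_eq G Y (a@b) (a'@b')"
  by (meson fs_app_left fs_app_right fs_trans)

lemma fs_sandwich: "fs_eq G Y X X' \<Longrightarrow> fs_eq G Y Z Z' \<Longrightarrow> X' \<in> lists Y \<Longrightarrow> x \<in> lists Y \<Longrightarrow>
   Z \<in> lists Y \<Longrightarrow> fs_eq G Y (X@x@Z) (X'@x@Z')"
proof -
  assume a: "fs_eq G Y X X'" "fs_eq G Y Z Z'" "X' \<in> lists Y" "x \<in> lists Y" "Z \<in> lists Y"
  have "fs_eq G Y (X@(x@Z)) (X'@(x@Z))" using fs_app_right a by auto
  moreover have "fs_eq G Y (X'@(x@Z)) (X'@(x@Z'))" using fs_app_left[OF fs_app_left[OF a(2) a(4)] a(3)] .
  ultimately show ?thesis by (rule fs_trans)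
qed

lemma EE_fs: "fs_eq G Y a b \<Longrightarrow> a \<in> lists Y \<Longrightarrow> b \<in> lists Y \<Longrightarrow> EE G Y a b"
  unfolding EE_def by (rule conjI, simp, rule conjI, simp, rule bexI[of _ "[]"], rule bexI[of _ "[]"]) auto

lemma EE_refl: "a \<in> lists Y \<Longrightarrow> EE G Y a a"
  by (simp add: EE_fs fs_refl)

lemma EE_sym: "EE G Y a b \<Longrightarrow> EE G Y b a"
  unfolding EE_def by (blast intro: fs_sym)

lemma EE_lists: "EE G Y a b \<Longrightarrow> a \<in> lists Y \<and> b \<in> lists Y"
  unfolding EE_def by blast

lemma EE_cancel: "EE G Y (c@a@d) (c@b@d) \<Longrightarrow> c \<in> lists Y \<Longrightarrow> d \<in> lists Y \<Longrightarrow>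
   a \<in> lists Y \<Longrightarrow> b \<in> lists Y \<Longrightarrow> EE G Y a b"
proof -
  assume h: "EE G Y (c@a@d) (c@b@d)" and c: "c \<in> lists Y" and d: "d \<in> lists Y"
    and a: "a \<in> lists Y" and b: "b \<in> lists Y"
  from h obtain c' d' where c': "c' \<in> lists Y" and d': "d' \<in> lists Y"
    and e: "fs_eq G Y (c'@(c@a@d)@d') (c'@(c@b@d)@d')" unfolding EE_def by blast
  show ?thesis unfolding EE_def
    using a b c d c' d' e by (intro conjI bexI[of _ "c'@c"] bexI[of _ "d@d'"]) auto
qed

lemma EE_ctxt: "EE G Y a b \<Longrightarrow> p \<in> lists Y \<Longrightarrow> q \<in> lists Y \<Longrightarrow> EE G Y (p@a@q) (p@b@q)"
proof -
  assume h: "EE G Y a b" and p: "p \<in> lists Y" and q: "q \<in> lists Y"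
  from h obtain c d where a: "a \<in> lists Y" and b: "b \<in> lists Y" and c: "c \<in> lists Y" and d: "d \<in> lists Y"
    and e: "fs_eq G Y (c@a@d) (c@b@d)" unfolding EE_def by blast
  have pc: "fs_prod G p \<in> carrier G" using p prodY_closed by auto
  have qc: "fs_prod G q \<in> carrier G" using q prodY_closed by auto
  define C where "C = conjw G (fs_prod G p) c"
  define D where "D = conjw G (inv (fs_prod G q)) d"
  have C: "C \<in> lists Y" unfolding C_def using conjw_lists pc c by auto
  have D: "D \<in> lists Y" unfolding D_def using conjw_lists qc d by auto
  have s1: "fs_eq G Y (C @ p) (p @ c)" unfolding C_def using swap[OF p c] by (rule fs_sym)
  have s2: "fs_eq G Y (q @ D) (d @ q)" unfolding D_def using swap'[OF q d] .
  have k: "\<And>x. x \<in> lists Y \<Longrightarrow> fs_eq G Y (C @ (p @ x @ q) @ D) (p @ (c @ x @ d) @ q)"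
  proof -
    fix x assume x: "x \<in> lists Y"
    have "fs_eq G Y ((C @ p) @ x @ (q @ D)) ((p @ c) @ x @ (d @ q))"
      using s1 s2 x p q c d C D
      by (intro fs_sandwich) auto
    then show "fs_eq G Y (C @ (p @ x @ q) @ D) (p @ (c @ x @ d) @ q)" by simp
  qed
  have "fs_eq G Y (p @ (c @ a @ d) @ q) (p @ (c @ b @ d) @ q)"
    using fs_ctxt[OF e p q] .
  then have "fs_eq G Y (C @ (p @ a @ q) @ D) (C @ (p @ b @ q) @ D)"
    using k[OF a] k[OF b] by (meson fs_sym fs_trans)
  then show ?thesis unfolding EE_def using a b p q C D by auto
qed

lemma EE_trans: "EE G Y a b \<Longrightarrow> EE G Y b c \<Longrightarrow> EE G Y a c"
proof -
  assume h1: "EE G Y a b" and h2: "EE G Y b c"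
  from h1 obtain c1 d1 where a: "a \<in> lists Y" and b: "b \<in> lists Y" and c1: "c1 \<in> lists Y" and d1: "d1 \<in> lists Y"
    and e1: "fs_eq G Y (c1@a@d1) (c1@b@d1)" unfolding EE_def by blast
  from h2 obtain c2 d2 where c: "c \<in> lists Y" and c2: "c2 \<in> lists Y" and d2: "d2 \<in> lists Y"
    and e2: "fs_eq G Y (c2@b@d2) (c2@c@d2)" unfolding EE_def by blast
  define C1 where "C1 = conjw G (fs_prod G c2) c1"
  define D1 where "D1 = conjw G (inv (fs_prod G d2)) d1"
  have pc: "fs_prod G c2 \<in> carrier G" using c2 prodY_closed by auto
  have qc: "fs_prod G d2 \<in> carrier G" using d2 prodY_closed by auto
  have C: "C1 \<in> lists Y" unfolding C1_def using conjw_lists pc c1 by auto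
  have D: "D1 \<in> lists Y" unfolding D1_def using conjw_lists qc d1 by auto
  have sw: "\<And>x. x \<in> lists Y \<Longrightarrow> fs_eq G Y (c2@(c1@x@d1)@d2) (C1 @ (c2 @ x @ d2) @ D1)"
  proof -
    fix x assume x: "x \<in> lists Y"
    have "fs_eq G Y ((c2@c1) @ x @ (d1@d2)) ((C1 @ c2) @ x @ (d2 @ D1))"
      using swap[OF c2 c1] fs_sym[OF swap'[OF d2 d1]] x C D c1 c2 d1 d2
      unfolding C1_def D1_def
      by (intro fs_sandwich) auto
    then show "fs_eq G Y (c2@(c1@x@d1)@d2) (C1 @ (c2 @ x @ d2) @ D1)" by simp
  qed
  have s1: "fs_eq G Y (c2@(c1@a@d1)@d2) (c2@(c1@b@d1)@d2)" using fs_ctxt[OF e1 c2 d2] .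
  have s3: "fs_eq G Y (C1 @ (c2 @ b @ d2) @ D1) (C1 @ (c2 @ c @ d2) @ D1)" using fs_ctxt[OF e2 C D] .
  have "fs_eq G Y (c2@(c1@a@d1)@d2) (c2@(c1@c@d1)@d2)"
    using s1 sw[OF b] s3 fs_sym[OF sw[OF c]] by (meson fs_trans)
  then show ?thesis unfolding EE_def using a c c1 c2 d1 d2
    by (intro conjI bexI[of _ "c2@c1"] bexI[of _ "d1@d2"]) auto
qed

lemma EE_cong: "EE G Y a b \<Longrightarrow> EE G Y a' b' \<Longrightarrow> EE G Y (a@a') (b@b')"
proof -
  assume h1: "EE G Y a b" and h2: "EE G Y a' b'"
  have l: "a \<in> lists Y" "b \<in> lists Y" "a' \<in> lists Y" "b' \<in> lists Y" using h1 h2 EE_lists by auto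
  have "EE G Y ([]@a@a') ([]@b@a')" using EE_ctxt[OF h1, of "[]" a'] l by auto
  moreover have "EE G Y (b@a'@[]) (b@b'@[])" using EE_ctxt[OF h2, of b "[]"] l by auto
  ultimately show ?thesis using EE_trans by auto
qed

lemma EE_swap: "p \<in> lists Y \<Longrightarrow> q \<in> lists Y \<Longrightarrow> EE G Y (p@q) (conjw G (fs_prod G p) q @ p)"
  using swap EE_fs conjw_lists prodY_closed by auto

lemma fs_forward: "fs_eq G Y v w \<Longrightarrow> (v \<in> lists Y \<longleftrightarrow> w \<in> lists Y) \<and> (v \<in> lists Y \<longrightarrow> fs_prod G v = fs_prod G w)"
proof (induction rule: fs_eq.induct)
  case (fs_ctxt v w u x)
  then show ?case by (auto simp: prodY_append)
next
  case (fs_rel1 g1 g2)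
  then have c: "g1 \<in> carrier G" "g2 \<in> carrier G" using Ysub by auto
  have "inv g2 \<otimes> g1 \<otimes> inv (inv g2) \<in> Y" using Yconj[of "inv g2" g1] fs_rel1 c by simp
  then have "inv g2 \<otimes> g1 \<otimes> g2 \<in> Y" using c by simp
  moreover have "g2 \<otimes> (inv g2 \<otimes> (g1 \<otimes> g2)) = g1 \<otimes> g2" using c by (simp add: m_assoc[symmetric])
  ultimately show ?case using fs_rel1 c by (auto simp: prod_Cons prod_Nil m_assoc)
next
  case (fs_rel2 g1 g2)
  then have "g1 \<in> carrier G" "g2 \<in> carrier G" using Ysub by auto
  moreover have "g1 \<otimes> g2 \<otimes> inv g1 \<in> Y" using Yconj fs_rel2 calculation by auto
  ultimately show ?case using fs_rel2 by (auto simp: prod_Cons prod_Nil m_assoc)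
qed auto

lemma EE_prod: "EE G Y a b \<Longrightarrow> fs_prod G a = fs_prod G b"
proof -
  assume "EE G Y a b"
  then obtain c d where a: "a \<in> lists Y" and b: "b \<in> lists Y" and c: "c \<in> lists Y" and d: "d \<in> lists Y"
    and e: "fs_eq G Y (c@a@d) (c@b@d)" unfolding EE_def by blast
  have "fs_prod G (c@a@d) = fs_prod G (c@b@d)" using fs_forward[OF e] a c d by auto
  then have "fs_prod G c \<otimes> fs_prod G a \<otimes> fs_prod G d = fs_prod G c \<otimes> fs_prod G b \<otimes> fs_prod G d"
    using a b c d by (simp add: prodY_append m_assoc prodY_closed)
  then show ?thesis using a b c d prodY_closed by (simp add: m_assoc Units_eq)
qed


definition ok :: "'a list \<times> 'a list \<Rightarrow> bool" where
  "ok P \<longleftrightarrow> fst P \<in> lists Y \<and> snd P \<in> lists Y"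

lemma comb_ok: "ok P \<Longrightarrow> ok Q \<Longrightarrow> ok (comb G P Q)"
  unfolding ok_def comb_def using conjw_lists prodY_closed by auto

lemma Iw_ok: "w \<in> lists (Y \<times> UNIV) \<Longrightarrow> ok (Iw G w)"
proof (induction w)
  case Nil then show ?case by (simp add: ok_def)
next
  case (Cons l w)
  obtain y b where l: "l = (y,b)" by force
  have "ok (I1 l)" using Cons l by (auto simp: ok_def)
  then show ?case using Cons comb_ok by auto
qed

lemma comb_assoc: "ok A \<Longrightarrow> ok B \<Longrightarrow> ok C \<Longrightarrow> comb G A (comb G B C) = comb G (comb G A B) C"
  unfolding ok_def comb_def
  by (auto simp: conjw_append prodY_append conjw_comp prodY_closed listsY_carrier)

lemma comb_Nil: "comb G ([],[]) Q = Q"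
  by (simp add: comb_def conjw_def)

lemma Iw_append: "w1 \<in> lists (Y \<times> UNIV) \<Longrightarrow> w2 \<in> lists (Y \<times> UNIV) \<Longrightarrow>
   Iw G (w1@w2) = comb G (Iw G w1) (Iw G w2)"
proof (induction w1)
  case Nil then show ?case by (simp add: comb_Nil)
next
  case (Cons l w)
  obtain y b where l: "l = (y,b)" by force
  have "ok (I1 l)" using Cons l by (auto simp: ok_def)
  then show ?case using Cons comb_assoc Iw_ok by auto
qed

lemma FF_refl: "ok P \<Longrightarrow> FF G Y P P"
  unfolding FF_def ok_def using EE_refl by (intro bexI[of _ "[]"]) auto

lemma FF_sym: "FF G Y P Q \<Longrightarrow> FF G Y Q P"
  unfolding FF_def using EE_sym by blast

lemma EE_app_refl: "EE G Y a b \<Longrightarrow> c \<in> lists Y \<Longrightarrow> EE G Y (a@c) (b@c)"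
  using EE_cong EE_refl by blast

lemma EE_refl_app: "EE G Y a b \<Longrightarrow> c \<in> lists Y \<Longrightarrow> EE G Y (c@a) (c@b)"
  using EE_cong EE_refl by blast

lemma FF_trans: "FF G Y P Q \<Longrightarrow> FF G Y Q S \<Longrightarrow> FF G Y P S"
proof -
  assume "FF G Y P Q" "FF G Y Q S"
  then obtain u1 u2 v2 v3 where u1: "u1 \<in> lists Y" and u2: "u2 \<in> lists Y" and v2: "v2 \<in> lists Y" and v3: "v3 \<in> lists Y"
    and e1: "EE G Y (u1 @ fst P) (u2 @ fst Q)" and e2: "EE G Y (u1 @ snd P) (u2 @ snd Q)"
    and e3: "EE G Y (v2 @ fst Q) (v3 @ fst S)" and e4: "EE G Y (v2 @ snd Q) (v3 @ snd S)"
    unfolding FF_def by blast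
  define b where "b = conjw G (fs_prod G v2) u2"
  have b: "b \<in> lists Y" unfolding b_def using conjw_lists prodY_closed v2 u2 by auto
  have sw: "EE G Y (v2@u2) (b@v2)" unfolding b_def using EE_swap v2 u2 by auto
  have "\<And>x y z. EE G Y (u1 @ x) (u2 @ y) \<Longrightarrow> EE G Y (v2 @ y) (v3 @ z) \<Longrightarrow>
     EE G Y ((v2@u1) @ x) ((b@v3) @ z)"
  proof -
    fix x y z assume h1: "EE G Y (u1 @ x) (u2 @ y)" and h2: "EE G Y (v2 @ y) (v3 @ z)"
    have ly: "y \<in> lists Y" using EE_lists[OF h1] by auto
    have "EE G Y (v2 @ (u1 @ x)) (v2 @ (u2 @ y))" using EE_refl_app[OF h1 v2] .
    moreover have "EE G Y ((v2 @ u2) @ y) ((b@v2) @ y)" using EE_app_refl[OF sw ly] .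
    moreover have "EE G Y (b @ (v2 @ y)) (b @ (v3 @ z))" using EE_refl_app[OF h2 b] .
    ultimately show "EE G Y ((v2@u1) @ x) ((b@v3) @ z)" using EE_trans by (metis append_assoc)
  qed
  then show ?thesis unfolding FF_def using e1 e2 e3 e4 u1 v2 v3 b
    by (intro bexI[of _ "v2@u1"] bexI[of _ "b@v3"]) auto
qed

lemma EE_conj: "EE G Y a b \<Longrightarrow> D \<in> lists Y \<Longrightarrow> EE G Y (conjw G (fs_prod G D) a) (conjw G (fs_prod G D) b)"
proof -
  assume h: "EE G Y a b" and D: "D \<in> lists Y"
  have l: "a \<in> lists Y" "b \<in> lists Y" using EE_lists[OF h] by auto
  have ca: "conjw G (fs_prod G D) a \<in> lists Y" "conjw G (fs_prod G D) b \<in> lists Y"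
    using conjw_lists prodY_closed D l by auto
  have "EE G Y (conjw G (fs_prod G D) a @ D) (D @ a)" using EE_sym[OF EE_swap[OF D l(1)]] .
  moreover have "EE G Y (D @ a) (D @ b)" using EE_refl_app[OF h D] .
  moreover have "EE G Y (D @ b) (conjw G (fs_prod G D) b @ D)" using EE_swap[OF D l(2)] .
  ultimately have "EE G Y ([] @ conjw G (fs_prod G D) a @ D) ([] @ conjw G (fs_prod G D) b @ D)"
    using EE_trans by auto
  then show ?thesis using EE_cancel ca D by blast
qed

lemma FF_left: "ok U \<Longrightarrow> ok P \<Longrightarrow> ok P' \<Longrightarrow> FF G Y P P' \<Longrightarrow> FF G Y (comb G U P) (comb G U P')"
proof -
  assume U: "ok U" and P: "ok P" and P': "ok P'" and "FF G Y P P'"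
  then obtain u1 u2 where u1: "u1 \<in> lists Y" and u2: "u2 \<in> lists Y"
    and e1: "EE G Y (u1 @ fst P) (u2 @ fst P')" and e2: "EE G Y (u1 @ snd P) (u2 @ snd P')"
    unfolding FF_def by blast
  have pe: "fs_prod G (u1 @ fst P) = fs_prod G (u2 @ fst P')" using EE_prod[OF e1] .
  have k: "\<And>u Q. u \<in> lists Y \<Longrightarrow> ok Q \<Longrightarrow> EE G Y (u @ conjw G (fs_prod G (fst Q)) (snd U) @ snd Q)
      (conjw G (fs_prod G (u @ fst Q)) (snd U) @ (u @ snd Q))"
  proof -
    fix u Q assume u: "u \<in> lists Y" and Q: "ok Q"
    have qc: "fs_prod G (fst Q) \<in> carrier G" using Q prodY_closed ok_def by auto
    have cu: "conjw G (fs_prod G (fst Q)) (snd U) \<in> lists Y" using conjw_lists qc U ok_def by auto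
    have "EE G Y (u @ conjw G (fs_prod G (fst Q)) (snd U)) (conjw G (fs_prod G u) (conjw G (fs_prod G (fst Q)) (snd U)) @ u)"
      using EE_swap[OF u cu] .
    moreover have "conjw G (fs_prod G u) (conjw G (fs_prod G (fst Q)) (snd U)) = conjw G (fs_prod G (u @ fst Q)) (snd U)"
      using conjw_comp prodY_closed u qc U Q listsY_carrier prodY_append by (simp add: ok_def)
    ultimately show "?thesis u Q" using EE_app_refl Q ok_def by (metis append_assoc)
  qed
  have "EE G Y ((u1 @ fst P) @ fst U) ((u2 @ fst P') @ fst U)" using EE_app_refl[OF e1] U ok_def by auto
  moreover have "EE G Y (u1 @ conjw G (fs_prod G (fst P)) (snd U) @ snd P) (u2 @ conjw G (fs_prod G (fst P')) (snd U) @ snd P')"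
  proof -
    have "EE G Y (conjw G (fs_prod G (u1 @ fst P)) (snd U) @ (u1 @ snd P)) (conjw G (fs_prod G (u2 @ fst P')) (snd U) @ (u2 @ snd P'))"
      using EE_refl_app[OF e2] pe conjw_lists prodY_closed U ok_def u2 P' by auto
    then show ?thesis using k[OF u1 P] k[OF u2 P'] EE_trans EE_sym by blast
  qed
  ultimately show ?thesis unfolding FF_def comb_def using u1 u2 by auto
qed

lemma FF_right: "ok X \<Longrightarrow> ok P \<Longrightarrow> ok P' \<Longrightarrow> FF G Y P P' \<Longrightarrow> FF G Y (comb G P X) (comb G P' X)"
proof -
  assume X: "ok X" and P: "ok P" and P': "ok P'" and "FF G Y P P'"
  then obtain u1 u2 where u1: "u1 \<in> lists Y" and u2: "u2 \<in> lists Y"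
    and e1: "EE G Y (u1 @ fst P) (u2 @ fst P')" and e2: "EE G Y (u1 @ snd P) (u2 @ snd P')"
    unfolding FF_def by blast
  define h where "h = fs_prod G (fst X)"
  have Dx: "fst X \<in> lists Y" using X ok_def by auto
  have hc: "h \<in> carrier G" unfolding h_def using Dx prodY_closed by auto
  have v1: "conjw G h u1 \<in> lists Y" and v2: "conjw G h u2 \<in> lists Y" using conjw_lists hc u1 u2 by auto
  have s: "\<And>u. u \<in> lists Y \<Longrightarrow> EE G Y (conjw G h u @ fst X) (fst X @ u)"
    unfolding h_def using EE_swap Dx EE_sym by blast
  have a: "EE G Y (conjw G h u1 @ fst X @ fst P) (conjw G h u2 @ fst X @ fst P')"
  proof -
    have "EE G Y ((conjw G h u1 @ fst X) @ fst P) ((fst X @ u1) @ fst P)" using EE_app_refl[OF s[OF u1]] P ok_def by auto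
    moreover have "EE G Y (fst X @ (u1 @ fst P)) (fst X @ (u2 @ fst P'))" using EE_refl_app[OF e1 Dx] .
    moreover have "EE G Y ((fst X @ u2) @ fst P') ((conjw G h u2 @ fst X) @ fst P')" using EE_app_refl[OF EE_sym[OF s[OF u2]]] P' ok_def by auto
    ultimately show ?thesis using EE_trans by (metis append_assoc)
  qed
  have b: "EE G Y (conjw G h u1 @ conjw G h (snd P) @ snd X) (conjw G h u2 @ conjw G h (snd P') @ snd X)"
    using EE_app_refl[OF EE_conj[OF e2 Dx], of "snd X"] X ok_def by (simp add: conjw_append h_def)
  show ?thesis unfolding FF_def comb_def using a b v1 v2 h_def by auto
qed


lemma FF_cancel: "y \<in> Y \<Longrightarrow> FF G Y (Iw G [(y, b), (y, \<not> b)]) (Iw G [])"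
proof -
  assume y: "y \<in> Y"
  have yc: "y \<in> carrier G" using y Ysub by auto
  have "Iw G [(y, b), (y, \<not> b)] = ([y],[y])"
    using yc by (cases b) (auto simp: comb_def conjw_def prod_Nil prod_Cons m_assoc)
  moreover have "FF G Y ([y],[y]) ([],[])"
    unfolding FF_def using y EE_refl by (intro bexI[of _ "[]"] bexI[of _ "[y]"]) auto
  ultimately show ?thesis by simp
qed

lemma FF_rel: "y \<in> Y \<Longrightarrow> z \<in> Y \<Longrightarrow> y' = inv z \<otimes> y \<otimes> z \<Longrightarrow>
  FF G Y (Iw G [(z, False), (y, True), (z, True)]) (Iw G [(y', True)])"
proof -
  assume y: "y \<in> Y" and z: "z \<in> Y" and y': "y' = inv z \<otimes> y \<otimes> z"
  have yc: "y \<in> carrier G" "z \<in> carrier G" using y z Ysub by auto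
  have y'Y: "y' \<in> Y" using Yconj[of "inv z" y] y' yc y by simp
  have "Iw G [(z, False), (y, True), (z, True)] = ([z],[y,z])"
    using yc by (auto simp: comb_def conjw_def prod_Nil prod_Cons)
  moreover have "Iw G [(y', True)] = ([],[y'])"
    using y'Y Ysub by (auto simp: comb_def conjw_def prod_Nil)
  moreover have "EE G Y [y,z] [z,y']"
    using EE_fs fs_rel1[of y Y z G] y z y' y'Y by auto
  then have "FF G Y ([z],[y,z]) ([],[y'])"
    unfolding FF_def using z EE_refl by (intro bexI[of _ "[]"] bexI[of _ "[z]"]) auto
  ultimately show ?thesis by simp
qed

lemma pres_main:
  assumes RY: "R \<subseteq> Y \<times> Y \<times> Y" and Rv: "\<And>y y' z. (y,y',z) \<in> R \<Longrightarrow> y' = inv z \<otimes> y \<otimes> z"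
  shows "pres_eq Y R v w \<Longrightarrow> (v \<in> lists (Y \<times> UNIV) \<longleftrightarrow> w \<in> lists (Y \<times> UNIV)) \<and>
      (v \<in> lists (Y \<times> UNIV) \<longrightarrow> FF G Y (Iw G v) (Iw G w))"
proof (induction rule: pres_eq.induct)
  case (pres_refl w)
  then show ?case using FF_refl Iw_ok by auto
next
  case (pres_sym v w)
  then show ?case using FF_sym by auto
next
  case (pres_trans u v w)
  then show ?case using FF_trans by blast
next
  case (pres_ctxt v w u x)
  show ?case
  proof (intro conjI impI)
    show "(u @ v @ x \<in> lists (Y \<times> UNIV)) = (u @ w @ x \<in> lists (Y \<times> UNIV))" using pres_ctxt by auto
  next
    assume h: "u @ v @ x \<in> lists (Y \<times> UNIV)"
    then have l: "u \<in> lists (Y \<times> UNIV)" "v \<in> lists (Y \<times> UNIV)" "x \<in> lists (Y \<times> UNIV)" "w \<in> lists (Y \<times> UNIV)"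
      using pres_ctxt by auto
    have "FF G Y (Iw G v) (Iw G w)" using pres_ctxt l by auto
    then have "FF G Y (comb G (Iw G v) (Iw G x)) (comb G (Iw G w) (Iw G x))"
      using FF_right Iw_ok l by auto
    then have "FF G Y (comb G (Iw G u) (comb G (Iw G v) (Iw G x))) (comb G (Iw G u) (comb G (Iw G w) (Iw G x)))"
      using FF_left Iw_ok l comb_ok by auto
    then show "FF G Y (Iw G (u @ v @ x)) (Iw G (u @ w @ x))"
      using l Iw_append by simp
  qed
next
  case (pres_cancel y b)
  then show ?case using FF_cancel by auto
next
  case (pres_rel y y' z)
  have m: "y \<in> Y" "y' \<in> Y" "z \<in> Y" using RY pres_rel by auto
  have "FF G Y (Iw G [(z, False), (y, True), (z, True)]) (Iw G [(y', True)])"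
    using FF_rel[OF m(1) m(3) Rv[OF pres_rel]] .
  then show ?case using m by auto
qed

lemma Iw_pos: "w \<in> lists Y \<Longrightarrow> Iw G (map (\<lambda>g. (g, True)) w) = ([], w)"
proof (induction w)
  case (Cons a w)
  then have "a \<in> carrier G" using Ysub by auto
  then show ?case using Cons by (auto simp: comb_def conjw_def prod_Nil)
qed simp

lemma wv_pos: "w \<in> lists Y \<Longrightarrow> word_val G (map (\<lambda>g. (g, True)) w) = fs_prod G w"
  by (induction w) (auto simp: word_val_def fs_prod_def letter_val_def)

lemma FF_final: "FF G Y ([], s1) ([], s2) \<Longrightarrow> s1 \<in> lists Y \<Longrightarrow> s2 \<in> lists Y \<Longrightarrow> EE G Y s1 s2"
proof -
  assume "FF G Y ([], s1) ([], s2)" and s: "s1 \<in> lists Y" "s2 \<in> lists Y"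
  then obtain u1 u2 where u1: "u1 \<in> lists Y" and u2: "u2 \<in> lists Y"
    and e1: "EE G Y u1 u2" and e2: "EE G Y (u1 @ s1) (u2 @ s2)"
    unfolding FF_def by auto
  have "EE G Y (u2 @ s2) (u1 @ s2)" using EE_app_refl[OF EE_sym[OF e1]] s by auto
  then have "EE G Y (u1 @ s1 @ []) (u1 @ s2 @ [])" using e2 EE_trans by auto
  then show ?thesis using EE_cancel u1 s by blast
qed

end

theorem theorem3p4:
  fixes G :: "('a, 'b) monoid_scheme" and Y :: "'a set"
  assumes "C_group G Y"
    and "s1 \<in> fs_words Y" and "s2 \<in> fs_words Y"
  shows "fs_equivalent G Y s1 s2 \<longleftrightarrow> fs_prod G s1 = fs_prod G s2"
proof -
  from assms(1) obtain R where eg: "equipped_group G Y" and RY: "R \<subseteq> Y \<times> Y \<times> Y"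
    and pr: "presents G Y R" unfolding C_group_def by blast
  from eg obtain F where grp: "group G" and Ysub: "Y \<subseteq> carrier G" and Fc: "F \<subseteq> carrier G"
    and YF: "Y = (\<Union>g\<in>F. conj_class G g)" unfolding equipped_group_def by blast
  interpret group G by (rule grp)
  have Yconj: "\<And>h y. h \<in> carrier G \<Longrightarrow> y \<in> Y \<Longrightarrow> h \<otimes>\<^bsub>G\<^esub> y \<otimes>\<^bsub>G\<^esub> inv\<^bsub>G\<^esub> h \<in> Y"
  proof -
    fix h y assume h: "h \<in> carrier G" and y: "y \<in> Y"
    then obtain g k where g: "g \<in> F" and k: "k \<in> carrier G" and yk: "y = k \<otimes>\<^bsub>G\<^esub> g \<otimes>\<^bsub>G\<^esub> inv\<^bsub>G\<^esub> k"
      using YF unfolding conj_class_def by blast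
    have gc: "g \<in> carrier G" using g Fc by auto
    have "h \<otimes>\<^bsub>G\<^esub> y \<otimes>\<^bsub>G\<^esub> inv\<^bsub>G\<^esub> h = (h \<otimes>\<^bsub>G\<^esub> k) \<otimes>\<^bsub>G\<^esub> g \<otimes>\<^bsub>G\<^esub> inv\<^bsub>G\<^esub> (h \<otimes>\<^bsub>G\<^esub> k)"
      using h k gc yk by (simp add: m_assoc inv_mult_group)
    then show "h \<otimes>\<^bsub>G\<^esub> y \<otimes>\<^bsub>G\<^esub> inv\<^bsub>G\<^esub> h \<in> Y" using YF g h k unfolding conj_class_def by blast
  qed
  interpret cg G Y using Ysub Yconj by unfold_locales auto
  have s: "s1 \<in> lists Y" "s2 \<in> lists Y" "s1 \<noteq> []" using assms(2,3) unfolding fs_words_def by auto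
  have Rv: "\<And>y y' z. (y,y',z) \<in> R \<Longrightarrow> y' = inv\<^bsub>G\<^esub> z \<otimes>\<^bsub>G\<^esub> y \<otimes>\<^bsub>G\<^esub> z"
  proof -
    fix y y' z assume r: "(y,y',z) \<in> R"
    have m: "y \<in> Y" "y' \<in> Y" "z \<in> Y" using r RY by auto
    then have mc: "y \<in> carrier G" "y' \<in> carrier G" "z \<in> carrier G" using Ysub by auto
    have "pres_eq Y R [(z, False), (y, True), (z, True)] [(y', True)]" using r by (rule pres_rel)
    then have "word_val G [(z, False), (y, True), (z, True)] = word_val G [(y', True)]"
      using pr m unfolding presents_def by auto
    then show "y' = inv\<^bsub>G\<^esub> z \<otimes>\<^bsub>G\<^esub> y \<otimes>\<^bsub>G\<^esub> z"
      using mc by (simp add: word_val_def letter_val_def m_assoc)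
  qed
  show ?thesis
  proof
    assume "fs_equivalent G Y s1 s2"
    then have "EE G Y s1 s2" unfolding fs_equivalent_def EE_def fs_words_def using s by blast
    then show "fs_prod G s1 = fs_prod G s2" by (rule EE_prod)
  next
    assume e: "fs_prod G s1 = fs_prod G s2"
    let ?p1 = "map (\<lambda>g. (g, True)) s1" and ?p2 = "map (\<lambda>g. (g, True)) s2"
    have l: "?p1 \<in> lists (Y \<times> UNIV)" "?p2 \<in> lists (Y \<times> UNIV)" using s by auto
    have "word_val G ?p1 = word_val G ?p2" using wv_pos s e by simp
    then have "pres_eq Y R ?p1 ?p2" using pr l unfolding presents_def by blast
    then have "FF G Y (Iw G ?p1) (Iw G ?p2)" using pres_main[OF RY Rv] l by blast
    then have "FF G Y ([], s1) ([], s2)" using Iw_pos s by simp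
    then have "EE G Y s1 s2" using FF_final s by blast
    then obtain c d where c: "c \<in> lists Y" and d: "d \<in> lists Y" and f: "fs_eq G Y (c@s1@d) (c@s2@d)"
      unfolding EE_def by blast
    obtain y where y: "y \<in> Y" using s by (cases s1) auto
    have "fs_eq G Y ([y]@(c@s1@d)@[y]) ([y]@(c@s2@d)@[y])" using fs_ctxt[OF f, of "[y]" "[y]"] y by simp
    then show "fs_equivalent G Y s1 s2" unfolding fs_equivalent_def fs_words_def
      using c d y by (intro bexI[of _ "y#c"] bexI[of _ "d@[y]"]) auto
  qed
qed

end
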